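(* Let $X$ be a semigroup and $Z\subset X$ a subsemigroup such that $X\setminus Z$ is an ideal in $X$. If $\mathcal A\in\upsilon(Z)\subset\upsilon(X)$ and $\mathcal B\in\upsilon(X)$ satisfy $\mathcal A=\mathcal A*\mathcal B*\mathcal A$, then $\mathcal A=\mathcal A*\mathcal B_Z*\mathcal A$, where $\mathcal B_Z=\{B\in\mathcal B: B\subset Z\}\in\upsilon(Z)$.
   Context: An upfamily on a set $X$ is a family of nonempty subsets of $X$ closed under taking supersets in $X$; $\upsilon(X)$ is the set of all upfamilies, with operation $\mathcal A*\mathcal B=\big\langle \bigcup_{a\in A} a*B_a : A\in\mathcal A,\ \{B_a\}_{a\in A}\subset\mathcal B\big\rangle$, where $\langle\mathcal C\rangle=\{A\subset X:\exists C\in\mathcal C,\ C\subset A\}$. For $Z\subset X$, $\upsilon(Z)$ is identified with the subset $\{\{A\subset X: A\cap Z\in\mathcal F\}:\mathcal F\in\upsilon(Z)\}$ of $\upsilon(X)$ (the image under the map induced by inclusion), i.e. upfamilies on $X$ having a member contained in $Z$ and generated by their members contained in $Z$. A nonempty subset $I$ of a semigroup $X$ is an ideal if $XI\cup IX\subset I$. *)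

theory Defs
  imports Main
begin

text \<open>The semigroup X is the carrier type 'a of class semigroup_mult.\<close>

definition upfamily_on :: "'a set \<Rightarrow> 'a set set \<Rightarrow> bool" where
  "upfamily_on X F \<longleftrightarrow> F \<subseteq> Pow X \<and> (\<forall>A\<in>F. A \<noteq> {}) \<and>
     (\<forall>A B. A \<in> F \<longrightarrow> A \<subseteq> B \<longrightarrow> B \<subseteq> X \<longrightarrow> B \<in> F)"

definition gen :: "'a set set \<Rightarrow> 'a set set" where
  "gen C = {A. \<exists>C0\<in>C. C0 \<subseteq> A}"

definition upmul :: "'a::semigroup_mult set set \<Rightarrow> 'a set set \<Rightarrow> 'a set set" where
  "upmul \<A> \<B> = gen {(\<Union>a\<in>A. (\<lambda>b. a * b) ` Bf a) | A Bf. A \<in> \<A> \<and> (\<forall>a\<in>A. Bf a \<in> \<B>)}"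

text \<open>Image of an upfamily on Z in the upfamilies on X = UNIV.\<close>
definition embed_up :: "'a set \<Rightarrow> 'a set set \<Rightarrow> 'a set set" where
  "embed_up Z F = {A. A \<inter> Z \<in> F}"

definition in_ups :: "'a set \<Rightarrow> 'a set set \<Rightarrow> bool" where
  "in_ups Z \<A> \<longleftrightarrow> (\<exists>F. upfamily_on Z F \<and> \<A> = embed_up Z F)"

definition sg_ideal :: "'a::semigroup_mult set \<Rightarrow> bool" where
  "sg_ideal I \<longleftrightarrow> I \<noteq> {} \<and> (\<forall>x y. y \<in> I \<longrightarrow> x * y \<in> I \<and> y * x \<in> I)"

definition restr_up :: "'a set \<Rightarrow> 'a set set \<Rightarrow> 'a set set" where
  "restr_up Z \<B> = {B \<in> \<B>. B \<subseteq> Z}"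

end

theory Submission
  imports Defs
begin

lemma upmulI:
  assumes "A0 \<in> \<A>" "\<forall>a\<in>A0. Bf a \<in> \<B>" "(\<Union>a\<in>A0. (\<lambda>b. a * b) ` Bf a) \<subseteq> S"
  shows "S \<in> upmul \<A> \<B>"
proof -
  have m: "(\<Union>a\<in>A0. (\<lambda>b. a * b) ` Bf a) \<in> {(\<Union>a\<in>A. (\<lambda>b. a * b) ` Bf a) | A Bf. A \<in> \<A> \<and> (\<forall>a\<in>A. Bf a \<in> \<B>)}"
    apply (rule CollectI)
    apply (rule exI[of _ A0])
    apply (rule exI[of _ Bf])
    using assms(1,2) by simp
  show ?thesis unfolding upmul_def gen_def
    apply (rule CollectI)
    apply (rule bexI[of "\<lambda>C0. C0 \<subseteq> S", OF assms(3)])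
    by (rule m)
qed
lemma upmulE:
  assumes "S \<in> upmul \<A> \<B>"
  obtains A0 Bf where "A0 \<in> \<A>" "\<forall>a\<in>A0. Bf a \<in> \<B>" "(\<Union>a\<in>A0. (\<lambda>b. a * b) ` Bf a) \<subseteq> S"
  using assms unfolding upmul_def gen_def by blast
lemma upmul_mono: assumes "A \<subseteq> A'" "B \<subseteq> B'" shows "upmul A B \<subseteq> upmul A' B'"
proof
  fix S assume "S \<in> upmul A B"
  then obtain A0 Bf where h: "A0 \<in> A" "\<forall>a\<in>A0. Bf a \<in> B" "(\<Union>a\<in>A0. (\<lambda>b. a * b) ` Bf a) \<subseteq> S"
    by (rule upmulE)
  show "S \<in> upmul A' B'" 
    apply (rule upmulI[of A0 _ Bf])
    using h assms by auto
qed
theorem lemma3p3: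
  fixes Z :: "'a::semigroup_mult set" and \<A> \<B> :: "'a set set"
  assumes "\<forall>x\<in>Z. \<forall>y\<in>Z. x * y \<in> Z"
    and "sg_ideal (UNIV - Z)"
    and "in_ups Z \<A>"
    and "upfamily_on UNIV \<B>"
    and "\<A> = upmul (upmul \<A> \<B>) \<A>"
  shows "\<A> = upmul (upmul \<A> (embed_up Z (restr_up Z \<B>))) \<A>"
proof
  define B' where "B' = embed_up Z (restr_up Z \<B>)"
  have BB: "B' \<subseteq> \<B>"
  proof
    fix S assume "S \<in> B'"
    hence "S \<inter> Z \<in> \<B>" by (simp add: B'_def embed_up_def restr_up_def)
    thus "S \<in> \<B>" using assms(4) unfolding upfamily_on_def by blast
  qed
  have "upmul (upmul \<A> B') \<A> \<subseteq> upmul (upmul \<A> \<B>) \<A>"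
    by (intro upmul_mono BB order_refl)
  also have "\<dots> = \<A>" using assms(5) by (rule sym)
  finally show "upmul (upmul \<A> (embed_up Z (restr_up Z \<B>))) \<A> \<subseteq> \<A>"
    unfolding B'_def .
  obtain F where F: "upfamily_on Z F" "\<A> = embed_up Z F"
    using assms(3) unfolding in_ups_def by blast
  have ne: "X \<noteq> {}" if "X \<in> \<A>" for X
    using F that unfolding upfamily_on_def embed_up_def by blast
  have ideal: "x * y \<notin> Z \<and> y * x \<notin> Z" if "y \<notin> Z" for x y
    using assms(2) that unfolding sg_ideal_def by blast
  show "\<A> \<subseteq> upmul (upmul \<A> (embed_up Z (restr_up Z \<B>))) \<A>"
  proof
    fix S assume S: "S \<in> \<A>"
    hence "S \<inter> Z \<in> \<A>" using F by (simp add: embed_up_def Int_assoc)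
    hence "S \<inter> Z \<in> upmul (upmul \<A> \<B>) \<A>" using assms(5) by argo
    then obtain C Af where C: "C \<in> upmul \<A> \<B>" "\<forall>c\<in>C. Af c \<in> \<A>"
      "(\<Union>c\<in>C. (\<lambda>b. c * b) ` Af c) \<subseteq> S \<inter> Z"
      by (rule upmulE)
    obtain A0 Bf where A0: "A0 \<in> \<A>" "\<forall>a\<in>A0. Bf a \<in> \<B>"
      "(\<Union>a\<in>A0. (\<lambda>b. a * b) ` Bf a) \<subseteq> C"
      using C(1) by (rule upmulE)
    define C0 where "C0 = (\<Union>a\<in>A0. (\<lambda>b. a * b) ` Bf a)"
    have sub: "Bf a \<subseteq> Z" if a: "a \<in> A0" for a
    proof
      fix b assume b: "b \<in> Bf a"
      hence ab: "a * b \<in> C" using A0(3) a by blast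
      then obtain d where d: "d \<in> Af (a * b)" using C(2) ne by blast
      hence "a * b * d \<in> Z" using C(3) ab by blast
      thus "b \<in> Z" using ideal by blast
    qed
    have "\<forall>a\<in>A0. Bf a \<in> B'"
      using A0(2) sub unfolding B'_def embed_up_def restr_up_def
      by (simp add: Int_absorb2)
    hence C0in: "C0 \<in> upmul \<A> B'"
      using A0(1) by (intro upmulI[of A0 _ Bf]) (auto simp: C0_def)
    have "\<forall>c\<in>C0. Af c \<in> \<A>" using C(2) A0(3) C0_def by blast
    moreover have "(\<Union>c\<in>C0. (\<lambda>b. c * b) ` Af c) \<subseteq> S"
      using C(3) A0(3) C0_def by blast
    ultimately have "S \<in> upmul (upmul \<A> B') \<A>"
      by (rule upmulI[of C0 "upmul \<A> B'" Af \<A> S, OF C0in])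
    thus "S \<in> upmul (upmul \<A> (embed_up Z (restr_up Z \<B>))) \<A>"
      unfolding B'_def .
  qed
qed

end
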